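(* Let $A$ be a nonempty finite poset. Suppose that for every $n\ge0$, every poset $X$, and every pushout square in $\mathbf{Pos}$ $$\begin{array}{ccc}\Pi\mathrm{Sd}^2\partial\Delta[n]&\to&X\\ \downarrow&&\downarrow\\ \Pi\mathrm{Sd}^2\Delta[n]&\to&Y\end{array}$$ (with left map induced by the boundary inclusion), if $A$ is a retract of $Y$ then $A$ is a retract of $X$. Then $A$ is not cofibrant in the model structure on $\mathbf{Pos}$.
   Context: $\Pi\mathrm{Sd}^2\Delta[n]$ is the poset whose elements are chains $S_0\subsetneq\cdots\subsetneq S_k$ of nonempty subsets of $\{0,\dots,n\}$, ordered by inclusion of chains (viewed as sets of subsets); $\Pi\mathrm{Sd}^2\partial\Delta[n]$ is the subposet of chains with $S_k\neq\{0,\dots,n\}$. The model structure on $\mathbf{Pos}$: a map $f$ is a weak equivalence/fibration iff it is so as a functor in the Thomason model structure on $\mathbf{Cat}$ (i.e. $\mathrm{Ex}^2N f$ is a weak equivalence/fibration of simplicial sets); it is compactly generated with generating cofibrations the inclusions $\Pi\mathrm{Sd}^2\partial\Delta[n]\to\Pi\mathrm{Sd}^2\Delta[n]$. An object $A$ is a retract of $Y$ if there are maps $A\to Y\to A$ composing to $\mathrm{id}_A$. *)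

theory Defs
  imports Main
begin

text \<open>All "large" notions (pushouts, fibrations,
  cofibrancy) are relativised to posets whose elements live in a fixed universe type.\<close>

type_synonym 'a pos = "'a set \<times> ('a \<times> 'a) set"

definition pcar :: "'a pos \<Rightarrow> 'a set" where "pcar P = fst P"
definition pord :: "'a pos \<Rightarrow> ('a \<times> 'a) set" where "pord P = snd P"

definition is_pos :: "'a pos \<Rightarrow> bool" where
  "is_pos P \<longleftrightarrow> pord P \<subseteq> pcar P \<times> pcar P
     \<and> (\<forall>x\<in>pcar P. (x, x) \<in> pord P)
     \<and> (\<forall>x y. (x, y) \<in> pord P \<and> (y, x) \<in> pord P \<longrightarrow> x = y)
     \<and> (\<forall>x y z. (x, y) \<in> pord P \<and> (y, z) \<in> pord P \<longrightarrow> (x, z) \<in> pord P)"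

definition pos_hom :: "'a pos \<Rightarrow> 'b pos \<Rightarrow> ('a \<Rightarrow> 'b) \<Rightarrow> bool" where
  "pos_hom P Q f \<longleftrightarrow> (\<forall>x\<in>pcar P. f x \<in> pcar Q)
     \<and> (\<forall>x y. (x, y) \<in> pord P \<longrightarrow> (f x, f y) \<in> pord Q)"

definition pos_retract :: "'a pos \<Rightarrow> 'b pos \<Rightarrow> bool" where
  "pos_retract A Y \<longleftrightarrow> (\<exists>i r. pos_hom A Y i \<and> pos_hom Y A r \<and> (\<forall>x\<in>pcar A. r (i x) = x))"

text \<open>Pi Sd^2 Delta[n]: chains of nonempty subsets of {0..n} (as sets of subsets),
  ordered by inclusion; Pi Sd^2 dDelta[n]: those chains whose top element is not {0..n}.\<close>
definition is_chain_subsets :: "nat \<Rightarrow> nat set set \<Rightarrow> bool" where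
  "is_chain_subsets n C \<longleftrightarrow> C \<noteq> {}
     \<and> (\<forall>S\<in>C. S \<noteq> {} \<and> S \<subseteq> {0..n})
     \<and> (\<forall>S\<in>C. \<forall>T\<in>C. S \<subseteq> T \<or> T \<subseteq> S)"

definition sd2 :: "nat \<Rightarrow> nat set set pos" where
  "sd2 n = ({C. is_chain_subsets n C},
            {(C, D). is_chain_subsets n C \<and> is_chain_subsets n D \<and> C \<subseteq> D})"

definition sd2_bdry :: "nat \<Rightarrow> nat set set pos" where
  "sd2_bdry n = ({C. is_chain_subsets n C \<and> {0..n} \<notin> C},
                 {(C, D). is_chain_subsets n C \<and> is_chain_subsets n D
                          \<and> {0..n} \<notin> C \<and> {0..n} \<notin> D \<and> C \<subseteq> D})"

definition pos_pushout ::
  "nat \<Rightarrow> 'u pos \<Rightarrow> 'u pos \<Rightarrow> (nat set set \<Rightarrow> 'u) \<Rightarrow> ('u \<Rightarrow> 'u) \<Rightarrow> (nat set set \<Rightarrow> 'u) \<Rightarrow> bool"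
where
  "pos_pushout n X Y f g h \<longleftrightarrow>
     is_pos X \<and> is_pos Y \<and> pos_hom (sd2_bdry n) X f \<and> pos_hom X Y g \<and> pos_hom (sd2 n) Y h
     \<and> (\<forall>c\<in>pcar (sd2_bdry n). g (f c) = h c)
     \<and> (\<forall>(Z :: 'u pos) g' h'. is_pos Z \<and> pos_hom X Z g' \<and> pos_hom (sd2 n) Z h'
          \<and> (\<forall>c\<in>pcar (sd2_bdry n). g' (f c) = h' c) \<longrightarrow>
          (\<exists>k. pos_hom Y Z k \<and> (\<forall>x\<in>pcar X. k (g x) = g' x) \<and> (\<forall>c\<in>pcar (sd2 n). k (h c) = h' c)
             \<and> (\<forall>k'. pos_hom Y Z k' \<and> (\<forall>x\<in>pcar X. k' (g x) = g' x)
                     \<and> (\<forall>c\<in>pcar (sd2 n). k' (h c) = h' c) \<longrightarrow> (\<forall>y\<in>pcar Y. k' y = k y))))"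

text \<open>Trivial fibrations of a cofibrantly generated model structure are exactly the maps
  with the right lifting property against the generating cofibrations.\<close>
definition triv_fib :: "'u pos \<Rightarrow> 'u pos \<Rightarrow> ('u \<Rightarrow> 'u) \<Rightarrow> bool" where
  "triv_fib E B p \<longleftrightarrow> is_pos E \<and> is_pos B \<and> pos_hom E B p
     \<and> (\<forall>n a b. pos_hom (sd2_bdry n) E a \<and> pos_hom (sd2 n) B b
          \<and> (\<forall>c\<in>pcar (sd2_bdry n). p (a c) = b c) \<longrightarrow>
          (\<exists>l. pos_hom (sd2 n) E l \<and> (\<forall>c\<in>pcar (sd2_bdry n). l c = a c)
               \<and> (\<forall>c\<in>pcar (sd2 n). p (l c) = b c)))"

definition pos_cofibrant :: "'u pos \<Rightarrow> bool" where
  "pos_cofibrant A \<longleftrightarrow> is_pos A \<and>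
     (\<forall>(E :: 'u pos) B p b. triv_fib E B p \<and> pos_hom A B b \<longrightarrow>
        (\<exists>l. pos_hom A E l \<and> (\<forall>x\<in>pcar A. p (l x) = b x)))"

end

theory Submission
  imports Defs "HOL-Library.Countable_Set" "HOL-Library.Nat_Bijection" "HOL-Library.FuncSet"
begin

lemma my_countable_PiE:
  "finite I \<Longrightarrow> (\<And>i. i \<in> I \<Longrightarrow> countable (F i)) \<Longrightarrow> countable (Pi\<^sub>E I F)"
  by (induct I arbitrary: F rule: finite_induct) (auto simp: PiE_insert_eq)

definition bd :: "nat \<Rightarrow> nat set set set" where "bd n = pcar (sd2_bdry n)"
definition sd :: "nat \<Rightarrow> nat set set set" where "sd n = pcar (sd2 n)"
definition itr :: "nat \<Rightarrow> nat set set set" where "itr n = sd n - bd n"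

lemma sd_eq: "sd n = {C. is_chain_subsets n C}" by (simp add: sd_def sd2_def pcar_def)
lemma bd_eq: "bd n = {C. is_chain_subsets n C \<and> {0..n} \<notin> C}" by (simp add: bd_def sd2_bdry_def pcar_def)
lemma itr_eq: "itr n = {C. is_chain_subsets n C \<and> {0..n} \<in> C}" by (auto simp: itr_def sd_eq bd_eq)
lemma pord_sd2: "pord (sd2 n) = {(C,D). C \<in> sd n \<and> D \<in> sd n \<and> C \<subseteq> D}"
  by (simp add: sd_eq sd2_def pord_def)
lemma pord_bd2: "pord (sd2_bdry n) = {(C,D). C \<in> bd n \<and> D \<in> bd n \<and> C \<subseteq> D}"
  by (auto simp: bd_eq sd2_bdry_def pord_def)
lemma bd_sub: "bd n \<subseteq> sd n" by (auto simp: bd_eq sd_eq)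
lemma finite_sd: "finite (sd n)"
proof -
  have "sd n \<subseteq> Pow (Pow {0..n})" by (auto simp: sd_eq is_chain_subsets_def)
  then show ?thesis by (rule finite_subset) simp
qed
lemma finite_bd: "finite (bd n)" using finite_sd bd_sub finite_subset by blast

definition attach :: "'u pos \<Rightarrow> nat \<Rightarrow> (nat set set \<Rightarrow> 'u) \<Rightarrow> (nat set set \<Rightarrow> 'u) \<Rightarrow> 'u pos" where
 "attach X n a cd = (pcar X \<union> cd ` itr n,
    pord X \<union> {(cd c, cd d) | c d. c \<in> itr n \<and> d \<in> itr n \<and> c \<subseteq> d}
           \<union> {(x, cd d) | x d. d \<in> itr n \<and> (\<exists>e\<in>bd n. (x, a e) \<in> pord X \<and> e \<subseteq> d)})"

definition lft :: "nat \<Rightarrow> (nat set set \<Rightarrow> 'u) \<Rightarrow> (nat set set \<Rightarrow> 'u) \<Rightarrow> nat set set \<Rightarrow> 'u" where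
  "lft n a cd c = (if c \<in> bd n then a c else cd c)"

lemma pcar_attach: "pcar (attach X n a cd) = pcar X \<union> cd ` itr n" by (simp add: attach_def pcar_def)
lemma pord_attach: "pord (attach X n a cd) = pord X \<union> {(cd c, cd d) | c d. c \<in> itr n \<and> d \<in> itr n \<and> c \<subseteq> d}
           \<union> {(x, cd d) | x d. d \<in> itr n \<and> (\<exists>e\<in>bd n. (x, a e) \<in> pord X \<and> e \<subseteq> d)}"
  by (simp add: attach_def pord_def)

locale att =
  fixes X :: "'u pos" and n a cd
  assumes X: "is_pos X" and a: "pos_hom (sd2_bdry n) X a"
    and inj: "inj_on cd (itr n)" and fresh: "cd ` itr n \<inter> pcar X = {}"
begin

lemma ordX: "pord X \<subseteq> pcar X \<times> pcar X" "\<And>x. x \<in> pcar X \<Longrightarrow> (x,x) \<in> pord X"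
  "\<And>x y. (x,y) \<in> pord X \<Longrightarrow> (y,x) \<in> pord X \<Longrightarrow> x = y"
  "\<And>x y z. (x,y) \<in> pord X \<Longrightarrow> (y,z) \<in> pord X \<Longrightarrow> (x,z) \<in> pord X"
  using X unfolding is_pos_def by blast+

lemma fresh': "c \<in> itr n \<Longrightarrow> cd c \<notin> pcar X" using fresh by blast
lemma freshp: "c \<in> itr n \<Longrightarrow> (cd c, y) \<notin> pord X" "c \<in> itr n \<Longrightarrow> (y, cd c) \<notin> pord X"
  using fresh' ordX(1) by blast+
lemma cdeq: "c \<in> itr n \<Longrightarrow> d \<in> itr n \<Longrightarrow> cd c = cd d \<longleftrightarrow> c = d" using inj inj_on_eq_iff by metis

lemma mem_att: "(x,y) \<in> pord (attach X n a cd) \<longleftrightarrow> (x,y) \<in> pord X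
  \<or> (\<exists>c d. x = cd c \<and> y = cd d \<and> c \<in> itr n \<and> d \<in> itr n \<and> c \<subseteq> d)
  \<or> (\<exists>d. y = cd d \<and> d \<in> itr n \<and> (\<exists>e\<in>bd n. (x, a e) \<in> pord X \<and> e \<subseteq> d))"
  unfolding pord_attach by blast

lemma is_pos_attach: "is_pos (attach X n a cd)"
proof -
  have 1: "pord (attach X n a cd) \<subseteq> pcar (attach X n a cd) \<times> pcar (attach X n a cd)"
  proof (rule subrelI)
    fix x y assume "(x,y) \<in> pord (attach X n a cd)"
    then consider "(x,y) \<in> pord X" | c d where "x = cd c" "y = cd d" "c \<in> itr n" "d \<in> itr n"
      | d e where "y = cd d" "d \<in> itr n" "(x, a e) \<in> pord X"
      unfolding mem_att by blast
    then show "(x,y) \<in> pcar (attach X n a cd) \<times> pcar (attach X n a cd)"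
      unfolding pcar_attach using ordX(1) by cases auto
  qed
  have 2: "(x, x) \<in> pord (attach X n a cd)" if "x \<in> pcar (attach X n a cd)" for x
    using that ordX(2) unfolding mem_att pcar_attach by auto
  have 3: "x = y" if h: "(x,y) \<in> pord (attach X n a cd)" "(y,x) \<in> pord (attach X n a cd)" for x y
  proof -
    consider "(x,y) \<in> pord X" | c d where "x = cd c" "y = cd d" "c \<in> itr n" "d \<in> itr n" "c \<subseteq> d"
      | d e where "y = cd d" "d \<in> itr n" "e \<in> bd n" "(x, a e) \<in> pord X"
      using h(1) unfolding mem_att by blast
    then show ?thesis
    proof cases
      case 1
      then have "(y,x) \<in> pord X" using h(2) freshp unfolding mem_att by metis
      then show ?thesis using 1 ordX(3) by blast
    next
      case 2
      then have "d \<subseteq> c" using h(2) freshp cdeq unfolding mem_att by metis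
      then show ?thesis using 2 by auto
    next
      case 3
      then show ?thesis using h(2) freshp ordX(1) fresh' unfolding mem_att by (metis mem_Sigma_iff subsetD)
    qed
  qed
  have 4: "(x,z) \<in> pord (attach X n a cd)" if h: "(x,y) \<in> pord (attach X n a cd)" "(y,z) \<in> pord (attach X n a cd)" for x y z
  proof -
    consider "(y,z) \<in> pord X" | c d where "y = cd c" "z = cd d" "c \<in> itr n" "d \<in> itr n" "c \<subseteq> d"
      | d e where "z = cd d" "d \<in> itr n" "e \<in> bd n" "(y, a e) \<in> pord X" "e \<subseteq> d"
      using h(2) unfolding mem_att by blast
    then show ?thesis
    proof cases
      case 1
      then have "(x,y) \<in> pord X" using h(1) freshp unfolding mem_att by metis
      then have "(x,z) \<in> pord X" using 1 ordX(4) by blast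
      then show ?thesis unfolding mem_att by (rule disjI1)
    next
      case 2
      note o2 = 2
      from h(1) consider "(x,y) \<in> pord X" | c' d' where "x = cd c'" "y = cd d'" "c' \<in> itr n" "d' \<in> itr n" "c' \<subseteq> d'"
      | d' e' where "y = cd d'" "d' \<in> itr n" "e' \<in> bd n" "(x, a e') \<in> pord X" "e' \<subseteq> d'"
        unfolding mem_att by blast
      then show ?thesis
      proof cases
        case 1
        then show ?thesis using o2 freshp by metis
      next
        case 2
        then have "d' = c" using o2 cdeq by metis
        then have "c' \<subseteq> d" using o2 2 by blast
        then have "\<exists>c d. x = cd c \<and> z = cd d \<and> c \<in> itr n \<and> d \<in> itr n \<and> c \<subseteq> d"
          using o2 2 by blast
        then show ?thesis unfolding mem_att by (intro disjI2 disjI1)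
      next
        case 3
        then have "d' = c" using o2 cdeq by metis
        then have "e' \<subseteq> d" using o2 3 by blast
        then have "\<exists>d. z = cd d \<and> d \<in> itr n \<and> (\<exists>e\<in>bd n. (x, a e) \<in> pord X \<and> e \<subseteq> d)"
          using o2 3 by blast
        then show ?thesis unfolding mem_att by (intro disjI2)
      qed
    next
      case 3
      have "(x,y) \<in> pord X" using h(1) freshp 3(4) unfolding mem_att by metis
      then have "(x, a e) \<in> pord X" using 3 ordX(4) by blast
      then have "\<exists>d. z = cd d \<and> d \<in> itr n \<and> (\<exists>e\<in>bd n. (x, a e) \<in> pord X \<and> e \<subseteq> d)"
        using 3 by blast
      then show ?thesis unfolding mem_att by (intro disjI2)
    qed
  qed
  show ?thesis unfolding is_pos_def using 1 2 3 4 by blast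
qed

lemma aX: "c \<in> bd n \<Longrightarrow> a c \<in> pcar X" using a unfolding pos_hom_def bd_def by blast
lemma aO: "c \<in> bd n \<Longrightarrow> d \<in> bd n \<Longrightarrow> c \<subseteq> d \<Longrightarrow> (a c, a d) \<in> pord X"
  using a unfolding pos_hom_def pord_bd2 by blast

lemma itr_up: "c \<in> itr n \<Longrightarrow> d \<in> sd n \<Longrightarrow> c \<subseteq> d \<Longrightarrow> d \<in> itr n"
  unfolding itr_eq sd_eq by blast

lemma hom_lft: "pos_hom (sd2 n) (attach X n a cd) (lft n a cd)"
  unfolding pos_hom_def
proof (intro conjI allI impI ballI)
  fix x assume "x \<in> pcar (sd2 n)"
  then show "lft n a cd x \<in> pcar (attach X n a cd)"
    unfolding pcar_attach lft_def using aX by (auto simp: itr_def sd_def)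
next
  fix c d assume "(c, d) \<in> pord (sd2 n)"
  then have cd: "c \<in> sd n" "d \<in> sd n" "c \<subseteq> d" unfolding pord_sd2 by auto
  show "(lft n a cd c, lft n a cd d) \<in> pord (attach X n a cd)"
  proof (cases "c \<in> bd n")
    case True
    show ?thesis
    proof (cases "d \<in> bd n")
      case True
      then show ?thesis using \<open>c \<in> bd n\<close> aO cd unfolding lft_def mem_att by simp
    next
      case False
      then have "d \<in> itr n" using cd itr_def by blast
      moreover have "(a c, a c) \<in> pord X" using aX ordX(2) True by blast
      ultimately have "\<exists>da. cd d = cd da \<and> da \<in> itr n \<and> (\<exists>e\<in>bd n. (a c, a e) \<in> pord X \<and> e \<subseteq> da)"
        using True cd by blast
      then show ?thesis using True False unfolding lft_def mem_att by simp
    qed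
  next
    case False
    then have ci: "c \<in> itr n" using cd itr_def by blast
    then have di: "d \<in> itr n" using itr_up cd by blast
    then have "d \<notin> bd n" using itr_def by blast
    then have "\<exists>ca da. cd c = cd ca \<and> cd d = cd da \<and> ca \<in> itr n \<and> da \<in> itr n \<and> ca \<subseteq> da"
      using ci di cd by blast
    then show ?thesis using False \<open>d \<notin> bd n\<close> unfolding lft_def mem_att by simp
  qed
qed

lemma incl: "pos_hom X (attach X n a cd) id"
  unfolding pos_hom_def pcar_attach mem_att by simp

lemma pushout: "pos_pushout n X (attach X n a cd) a id (lft n a cd)"
  unfolding pos_pushout_def
proof (intro conjI allI impI ballI)
  show "is_pos X" by (rule X)
  show "is_pos (attach X n a cd)" by (rule is_pos_attach)
  show "pos_hom (sd2_bdry n) X a" by (rule a)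
  show "pos_hom X (attach X n a cd) id" by (rule incl)
  show "pos_hom (sd2 n) (attach X n a cd) (lft n a cd)" by (rule hom_lft)
  show "id (a c) = lft n a cd c" if "c \<in> pcar (sd2_bdry n)" for c
    using that by (simp add: lft_def bd_def)
next
  fix Z :: "'a pos" and g' h'
  assume asm: "is_pos Z \<and> pos_hom X Z g' \<and> pos_hom (sd2 n) Z h' \<and> (\<forall>c\<in>pcar (sd2_bdry n). g' (a c) = h' c)"
  then have Z: "is_pos Z" and g': "pos_hom X Z g'" and h': "pos_hom (sd2 n) Z h'"
    and comp: "\<And>c. c \<in> bd n \<Longrightarrow> g' (a c) = h' c" by (auto simp: bd_def)
  have Ztr: "\<And>x y z. (x,y) \<in> pord Z \<Longrightarrow> (y,z) \<in> pord Z \<Longrightarrow> (x,z) \<in> pord Z"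
    using Z unfolding is_pos_def by blast
  define k where "k y = (if y \<in> pcar X then g' y else h' (the_inv_into (itr n) cd y))" for y
  have kcd: "k (cd c) = h' c" if "c \<in> itr n" for c
    using that fresh' inj the_inv_into_f_f unfolding k_def by fastforce
  have kX: "k x = g' x" if "x \<in> pcar X" for x using that unfolding k_def by simp
  have khom: "pos_hom (attach X n a cd) Z k"
    unfolding pos_hom_def
  proof (intro conjI allI impI ballI)
    fix y assume "y \<in> pcar (attach X n a cd)"
    then show "k y \<in> pcar Z" unfolding pcar_attach using kX kcd g' h'
      unfolding pos_hom_def itr_def sd_def by auto
  next
    fix x y assume "(x,y) \<in> pord (attach X n a cd)"
    then consider "(x,y) \<in> pord X" | c d where "x = cd c" "y = cd d" "c \<in> itr n" "d \<in> itr n" "c \<subseteq> d"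
      | d e where "y = cd d" "d \<in> itr n" "e \<in> bd n" "(x, a e) \<in> pord X" "e \<subseteq> d"
      unfolding mem_att by blast
    then show "(k x, k y) \<in> pord Z"
    proof cases
      case 1
      then have "x \<in> pcar X" "y \<in> pcar X" using ordX(1) by auto
      then show ?thesis using 1 g' kX unfolding pos_hom_def by simp
    next
      case 2
      then have "(c, d) \<in> pord (sd2 n)" unfolding pord_sd2 itr_def by blast
      then show ?thesis using 2 kcd h' unfolding pos_hom_def by simp
    next
      case 3
      have xX: "x \<in> pcar X" using 3 ordX(1) by auto
      have 31: "(g' x, g' (a e)) \<in> pord Z" using 3 g' unfolding pos_hom_def by blast
      have "(e, d) \<in> pord (sd2 n)" using 3 bd_sub unfolding pord_sd2 itr_def by blast
      then have 32: "(h' e, h' d) \<in> pord Z" using h' unfolding pos_hom_def by blast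
      have "(g' x, h' d) \<in> pord Z" using Ztr[OF 31] 32 comp 3 by simp
      then show ?thesis using 3 kX kcd xX by simp
    qed
  qed
  show "\<exists>k. pos_hom (attach X n a cd) Z k \<and> (\<forall>x\<in>pcar X. k (id x) = g' x) \<and> (\<forall>c\<in>pcar (sd2 n). k (lft n a cd c) = h' c)
             \<and> (\<forall>k'. pos_hom (attach X n a cd) Z k' \<and> (\<forall>x\<in>pcar X. k' (id x) = g' x)
                     \<and> (\<forall>c\<in>pcar (sd2 n). k' (lft n a cd c) = h' c) \<longrightarrow> (\<forall>y\<in>pcar (attach X n a cd). k' y = k y))"
  proof (intro exI[of _ k] conjI allI impI ballI)
    show "pos_hom (attach X n a cd) Z k" by (rule khom)
    show "k (id x) = g' x" if "x \<in> pcar X" for x using that kX by simp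
    show "k (lft n a cd c) = h' c" if "c \<in> pcar (sd2 n)" for c
    proof (cases "c \<in> bd n")
      case True
      then show ?thesis using kX aX comp by (simp add: lft_def)
    next
      case False
      then have "c \<in> itr n" using that by (simp add: itr_def sd_def)
      then show ?thesis using False kcd by (simp add: lft_def)
    qed
  next
    fix k' y
    assume k': "pos_hom (attach X n a cd) Z k' \<and> (\<forall>x\<in>pcar X. k' (id x) = g' x) \<and> (\<forall>c\<in>pcar (sd2 n). k' (lft n a cd c) = h' c)"
      and y: "y \<in> pcar (attach X n a cd)"
    show "k' y = k y"
    proof (cases "y \<in> pcar X")
      case True
      then show ?thesis using k' kX by simp
    next
      case False
      then obtain c where c: "c \<in> itr n" "y = cd c" using y unfolding pcar_attach by blast
      then have "c \<in> pcar (sd2 n)" "c \<notin> bd n" by (auto simp: itr_def sd_def)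
      then have "k' (lft n a cd c) = h' c" using k' by blast
      then have "k' y = h' c" using c \<open>c \<notin> bd n\<close> by (simp add: lft_def)
      then show ?thesis using kcd c by simp
    qed
  qed
qed

end


lemma absorb:
  assumes "finite S" "S \<subseteq> (\<Union>k. F k)" "\<And>k. F k \<subseteq> F (Suc k)"
  shows "\<exists>m. S \<subseteq> F m"
  using assms(1,2)
proof (induction S rule: finite_induct)
  case empty then show ?case by blast
next
  case (insert x S)
  then obtain m where m: "S \<subseteq> F m" by blast
  obtain j where j: "x \<in> F j" using insert by blast
  have "F m \<subseteq> F (max m j)" "F j \<subseteq> F (max m j)"
    using lift_Suc_mono_le[of F, OF assms(3)] by auto
  then show ?case using m j by blast
qed

locale cons =
  fixes A :: "'u pos" and f :: "nat \<Rightarrow> 'u"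
  assumes A: "is_pos A" and finA: "finite (pcar A)" and inj_f: "inj f"
begin

definition K :: "(nat \<times> nat set set) set" where "K = (UNIV :: nat set) \<times> (\<Union>n. sd n)"

lemma countK: "countable K"
proof -
  have "countable (\<Union>n. sd n)" by (rule countable_UN) (auto intro: countable_finite finite_sd)
  then show ?thesis unfolding K_def by (intro countable_SIGMA) auto
qed

definition code :: "nat \<times> nat set set \<Rightarrow> 'u" where "code q = f (to_nat_on K q)"

lemma inj_code: "inj_on code K"
proof (rule inj_onI)
  fix x y assume "x \<in> K" "y \<in> K" "code x = code y"
  then have "to_nat_on K x = to_nat_on K y" unfolding code_def using inj_f by (simp add: inj_eq)
  then show "x = y" using inj_on_to_nat_on[OF countK] \<open>x \<in> K\<close> \<open>y \<in> K\<close> by (simp add: inj_on_eq_iff)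
qed

lemma inK: "c \<in> sd n \<Longrightarrow> (k, c) \<in> K" unfolding K_def by auto

definition P :: "(nat \<times> (nat set set \<Rightarrow> 'u) \<times> (nat set set \<Rightarrow> 'u)) set" where
  "P = (SIGMA n:UNIV. (PiE (bd n) (\<lambda>_. code ` K)) \<times> (PiE (sd n) (\<lambda>_. pcar A)))"

lemma countP: "countable P"
proof -
  have "countable (PiE (bd n) (\<lambda>_. code ` K) \<times> PiE (sd n) (\<lambda>_. pcar A))" for n
  proof -
    have c1: "countable (PiE (bd n) (\<lambda>_. code ` K))"
      by (rule my_countable_PiE[OF finite_bd]) (rule countable_image[OF countK])
    have c2: "countable (PiE (sd n) (\<lambda>_. pcar A))"
      by (rule my_countable_PiE[OF finite_sd]) (rule countable_finite[OF finA])
    show ?thesis using c1 c2 by (intro countable_SIGMA) auto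
  qed
  note cn = this
  show ?thesis unfolding P_def by (rule countable_SIGMA) (simp_all add: cn)
qed

definition prob :: "nat \<Rightarrow> nat \<times> (nat set set \<Rightarrow> 'u) \<times> (nat set set \<Rightarrow> 'u)" where
  "prob k = from_nat_into P (fst (prod_decode k))"
definition pn where "pn k = fst (prob k)"
definition pa where "pa k = fst (snd (prob k))"
definition pb where "pb k = snd (snd (prob k))"

definition p :: "'u \<Rightarrow> 'u" where "p y = (case the_inv_into K code y of (k, c) \<Rightarrow> pb k c)"

lemma p_code: "(k, c) \<in> K \<Longrightarrow> p (code (k, c)) = pb k c"
  unfolding p_def using the_inv_into_f_f[OF inj_code] by simp

definition valid :: "nat \<Rightarrow> 'u pos \<Rightarrow> bool" where
  "valid k X \<longleftrightarrow> pos_hom (sd2_bdry (pn k)) X (pa k) \<and> pos_hom (sd2 (pn k)) A (pb k)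
      \<and> (\<forall>c\<in>bd (pn k). p (pa k c) = pb k c)"

primrec st :: "nat \<Rightarrow> 'u pos" where
  "st 0 = ({}, {})"
| "st (Suc k) = (if valid k (st k) then attach (st k) (pn k) (pa k) (\<lambda>c. code (k, c)) else st k)"

lemma Atr: "(x,y) \<in> pord A \<Longrightarrow> (y,z) \<in> pord A \<Longrightarrow> (x,z) \<in> pord A"
  using A unfolding is_pos_def by blast

lemma inv: "is_pos (st k) \<and> pcar (st k) \<subseteq> code ` ({i. i < k} \<times> UNIV \<inter> K) \<and> pos_hom (st k) A p"
proof (induction k)
  case 0
  then show ?case by (simp add: is_pos_def pcar_def pord_def pos_hom_def)
next
  case (Suc k)
  show ?case
  proof (cases "valid k (st k)")
    case False
    then show ?thesis using Suc by auto
  next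
    case True
    let ?X = "st k" and ?n = "pn k" and ?a = "pa k" and ?cd = "\<lambda>c. code (k, c)"
    have injc: "inj_on ?cd (itr ?n)"
      by (rule inj_onI) (use inj_code inK in \<open>auto simp: itr_def dest: inj_onD\<close>)
    have fr: "?cd ` itr ?n \<inter> pcar ?X = {}"
    proof (rule ccontr)
      assume "?cd ` itr ?n \<inter> pcar ?X \<noteq> {}"
      then obtain c i c' where "c \<in> itr ?n" "code (k,c) = code (i, c')" "i < k" "(i,c') \<in> K"
        using Suc by blast
      moreover have "(k, c) \<in> K" using \<open>c \<in> itr ?n\<close> inK itr_def by blast
      ultimately show False using inj_code by (auto dest: inj_onD)
    qed
    have va: "pos_hom (sd2_bdry ?n) ?X ?a" and vb: "pos_hom (sd2 ?n) A (pb k)"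
      and vc: "\<And>c. c \<in> bd ?n \<Longrightarrow> p (?a c) = pb k c"
      using True unfolding valid_def by auto
    interpret att ?X ?n ?a ?cd
      using Suc va injc fr by unfold_locales auto
    have st: "st (Suc k) = attach ?X ?n ?a ?cd" using True by simp
    have pc: "p (code (k, c)) = pb k c" if "c \<in> itr ?n" for c
      using p_code inK that itr_def by blast
    have pA: "pb k c \<in> pcar A" if "c \<in> itr ?n" for c
      using vb that unfolding pos_hom_def itr_def sd_def by blast
    have IHp: "pos_hom ?X A p" using Suc by blast
    have hom: "pos_hom (st (Suc k)) A p"
      unfolding st pos_hom_def
    proof (intro conjI allI impI ballI)
      fix x assume "x \<in> pcar (attach ?X ?n ?a ?cd)"
      then show "p x \<in> pcar A" unfolding pcar_attach using IHp pc pA unfolding pos_hom_def by auto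
    next
      fix x y assume "(x,y) \<in> pord (attach ?X ?n ?a ?cd)"
      then consider "(x,y) \<in> pord ?X" | c d where "x = ?cd c" "y = ?cd d" "c \<in> itr ?n" "d \<in> itr ?n" "c \<subseteq> d"
        | d e where "y = ?cd d" "d \<in> itr ?n" "e \<in> bd ?n" "(x, ?a e) \<in> pord ?X" "e \<subseteq> d"
        unfolding mem_att by blast
      then show "(p x, p y) \<in> pord A"
      proof cases
        case 1 then show ?thesis using IHp unfolding pos_hom_def by blast
      next
        case 2
        then have "(c, d) \<in> pord (sd2 ?n)" unfolding pord_sd2 itr_def by blast
        then show ?thesis using 2 pc vb unfolding pos_hom_def by simp
      next
        case 3
        have 31: "(p x, pb k e) \<in> pord A" using 3 IHp vc unfolding pos_hom_def by metis
        have "(e, d) \<in> pord (sd2 ?n)" using 3 bd_sub unfolding pord_sd2 itr_def by blast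
        then have "(pb k e, pb k d) \<in> pord A" using vb unfolding pos_hom_def by blast
        then show ?thesis using Atr[OF 31] 3 pc by simp
      qed
    qed
    have car: "pcar (st (Suc k)) \<subseteq> code ` ({i. i < Suc k} \<times> UNIV \<inter> K)"
    proof
      fix y assume "y \<in> pcar (st (Suc k))"
      then have "y \<in> pcar ?X \<or> y \<in> ?cd ` itr ?n" unfolding st pcar_attach by blast
      then show "y \<in> code ` ({i. i < Suc k} \<times> UNIV \<inter> K)"
      proof
        assume "y \<in> pcar ?X"
        then show ?thesis using Suc by auto
      next
        assume "y \<in> ?cd ` itr ?n"
        then obtain c where "c \<in> itr ?n" "y = code (k, c)" by blast
        moreover have "(k, c) \<in> K" using \<open>c \<in> itr ?n\<close> inK itr_def by blast
        ultimately show ?thesis by blast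
      qed
    qed
    show ?thesis using is_pos_attach st hom car by simp
  qed
qed

lemma att_step: assumes "valid k (st k)" shows "att (st k) (pn k) (pa k) (\<lambda>c. code (k, c))"
proof -
  let ?X = "st k" and ?n = "pn k" and ?a = "pa k" and ?cd = "\<lambda>c. code (k, c)"
  have I: "is_pos (st k)" "pcar (st k) \<subseteq> code ` ({i. i < k} \<times> UNIV \<inter> K)" using inv by auto
  have injc: "inj_on ?cd (itr ?n)"
    by (rule inj_onI) (use inj_code inK in \<open>auto simp: itr_def dest: inj_onD\<close>)
  have fr: "?cd ` itr ?n \<inter> pcar ?X = {}"
  proof (rule ccontr)
    assume "?cd ` itr ?n \<inter> pcar ?X \<noteq> {}"
    then obtain c i c' where "c \<in> itr ?n" "code (k,c) = code (i, c')" "i < k" "(i,c') \<in> K"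
      using I by blast
    moreover have "(k, c) \<in> K" using \<open>c \<in> itr ?n\<close> inK itr_def by blast
    ultimately show False using inj_code by (auto dest: inj_onD)
  qed
  have va: "pos_hom (sd2_bdry ?n) ?X ?a" using assms unfolding valid_def by auto
  show ?thesis using I va injc fr by unfold_locales auto
qed

lemma mono_st: "pcar (st k) \<subseteq> pcar (st (Suc k))" "pord (st k) \<subseteq> pord (st (Suc k))"
  by (cases "valid k (st k)"; simp add: pcar_attach pord_attach; blast)+

lemma mono_le: assumes "k \<le> k'" shows "pcar (st k) \<subseteq> pcar (st k')" "pord (st k) \<subseteq> pord (st k')"
proof -
  show "pcar (st k) \<subseteq> pcar (st k')" using lift_Suc_mono_le[of "\<lambda>k. pcar (st k)", OF mono_st(1) assms] .
  show "pord (st k) \<subseteq> pord (st k')" using lift_Suc_mono_le[of "\<lambda>k. pord (st k)", OF mono_st(2) assms] .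
qed

definition E :: "'u pos" where "E = (\<Union>k. pcar (st k), \<Union>k. pord (st k))"
lemma pcar_E: "pcar E = (\<Union>k. pcar (st k))" by (simp add: E_def pcar_def)
lemma pord_E: "pord E = (\<Union>k. pord (st k))" by (simp add: E_def pord_def)

lemma st_pos: "pord (st k) \<subseteq> pcar (st k) \<times> pcar (st k)"
  "x \<in> pcar (st k) \<Longrightarrow> (x, x) \<in> pord (st k)"
  "(x,y) \<in> pord (st k) \<Longrightarrow> (y,x) \<in> pord (st k) \<Longrightarrow> x = y"
  "(x,y) \<in> pord (st k) \<Longrightarrow> (y,z) \<in> pord (st k) \<Longrightarrow> (x,z) \<in> pord (st k)"
proof -
  have "is_pos (st k)" using inv by blast
  then show "pord (st k) \<subseteq> pcar (st k) \<times> pcar (st k)"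
    "x \<in> pcar (st k) \<Longrightarrow> (x, x) \<in> pord (st k)"
    "(x,y) \<in> pord (st k) \<Longrightarrow> (y,x) \<in> pord (st k) \<Longrightarrow> x = y"
    "(x,y) \<in> pord (st k) \<Longrightarrow> (y,z) \<in> pord (st k) \<Longrightarrow> (x,z) \<in> pord (st k)"
    unfolding is_pos_def by blast+
qed

lemma is_pos_E: "is_pos E"
  unfolding is_pos_def
proof (intro conjI allI impI ballI)
  show "pord E \<subseteq> pcar E \<times> pcar E"
  proof (rule subrelI)
    fix x y assume "(x,y) \<in> pord E"
    then obtain i where "(x,y) \<in> pord (st i)" unfolding pord_E by blast
    then have "x \<in> pcar (st i)" "y \<in> pcar (st i)" using st_pos(1) by blast+
    then show "(x,y) \<in> pcar E \<times> pcar E" unfolding pcar_E by blast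
  qed
  show "(x, x) \<in> pord E" if hx: "x \<in> pcar E" for x
  proof -
    obtain i where "x \<in> pcar (st i)" using hx unfolding pcar_E by blast
    then have "(x,x) \<in> pord (st i)" by (rule st_pos(2))
    then show ?thesis unfolding pord_E by blast
  qed
next
  fix x y assume "(x, y) \<in> pord E \<and> (y, x) \<in> pord E"
  then obtain i j where "(x,y) \<in> pord (st i)" "(y,x) \<in> pord (st j)" unfolding pord_E by blast
  then have "(x,y) \<in> pord (st (max i j))" "(y,x) \<in> pord (st (max i j))"
    using mono_le(2)[of i "max i j"] mono_le(2)[of j "max i j"] by auto
  then show "x = y" by (rule st_pos(3))
next
  fix x y z assume "(x, y) \<in> pord E \<and> (y, z) \<in> pord E"
  then obtain i j where "(x,y) \<in> pord (st i)" "(y,z) \<in> pord (st j)" unfolding pord_E by blast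
  then have "(x,y) \<in> pord (st (max i j))" "(y,z) \<in> pord (st (max i j))"
    using mono_le(2)[of i "max i j"] mono_le(2)[of j "max i j"] by auto
  then have "(x,z) \<in> pord (st (max i j))" by (rule st_pos(4))
  then show "(x,z) \<in> pord E" unfolding pord_E by blast
qed

lemma hom_mono: "pos_hom R Q g \<Longrightarrow> pcar Q \<subseteq> pcar Q' \<Longrightarrow> pord Q \<subseteq> pord Q' \<Longrightarrow> pos_hom R Q' g"
  unfolding pos_hom_def by blast

lemma hom_E: "pos_hom E A p"
  unfolding pos_hom_def pcar_E pord_E using inv unfolding pos_hom_def by blast

lemma carE_code: "pcar E \<subseteq> code ` K" unfolding pcar_E using inv by blast

lemma tf: "triv_fib E A p"
  unfolding triv_fib_def
proof (intro conjI allI impI is_pos_E A hom_E)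
  fix n a b
  assume H: "pos_hom (sd2_bdry n) E a \<and> pos_hom (sd2 n) A b \<and> (\<forall>c\<in>pcar (sd2_bdry n). p (a c) = b c)"
  then have ha: "pos_hom (sd2_bdry n) E a" and hb: "pos_hom (sd2 n) A b"
    and comp: "\<And>c. c \<in> bd n \<Longrightarrow> p (a c) = b c" by (auto simp: bd_def)
  have aE: "a c \<in> pcar E" if "c \<in> bd n" for c using ha that unfolding pos_hom_def bd_def by blast
  have aO: "(a c, a d) \<in> pord E" if "(c, d) \<in> pord (sd2_bdry n)" for c d using ha that unfolding pos_hom_def by blast
  define a' where "a' = restrict a (bd n)"
  define b' where "b' = restrict b (sd n)"
  have inP: "(n, a', b') \<in> P"
  proof -
    have "a' \<in> PiE (bd n) (\<lambda>_. code ` K)" unfolding a'_def using aE carE_code by auto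
    moreover have "b' \<in> PiE (sd n) (\<lambda>_. pcar A)" unfolding b'_def using hb
      unfolding pos_hom_def sd_def by auto
    ultimately show ?thesis unfolding P_def by blast
  qed
  have "\<exists>m. a ` bd n \<subseteq> pcar (st m)"
    by (rule absorb) (use aE finite_bd mono_st in \<open>auto simp: pcar_E\<close>)
  then obtain m1 where m1: "a ` bd n \<subseteq> pcar (st m1)" by blast
  have finpo: "finite (pord (sd2_bdry n))"
    by (rule finite_subset[of _ "bd n \<times> bd n"]) (auto simp: pord_bd2 finite_bd)
  have "\<exists>m. (\<lambda>(c,d). (a c, a d)) ` pord (sd2_bdry n) \<subseteq> pord (st m)"
    by (rule absorb) (use aO finpo mono_st in \<open>auto simp: pord_E\<close>)
  then obtain m2 where m2: "(\<lambda>(c,d). (a c, a d)) ` pord (sd2_bdry n) \<subseteq> pord (st m2)" by blast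
  define m where "m = max m1 m2"
  obtain i where i: "from_nat_into P i = (n, a', b')" using from_nat_into_surj[OF countP inP] by blast
  define j where "j = prod_encode (i, m)"
  have mj: "m \<le> j" unfolding j_def by (rule le_prod_encode_2)
  have probj: "prob j = (n, a', b')" unfolding prob_def j_def using i by simp
  then have pnj: "pn j = n" and paj: "pa j = a'" and pbj: "pb j = b'" by (auto simp: pn_def pa_def pb_def)
  have c1: "pcar (st m1) \<subseteq> pcar (st j)" using mono_le(1)[of m1 j] mj m_def by simp
  have c2: "pord (st m2) \<subseteq> pord (st j)" using mono_le(2)[of m2 j] mj m_def by simp
  have va: "pos_hom (sd2_bdry n) (st j) a'"
    unfolding pos_hom_def
  proof (intro conjI allI impI ballI)
    fix c assume "c \<in> pcar (sd2_bdry n)"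
    then show "a' c \<in> pcar (st j)" using m1 c1 unfolding a'_def bd_def by auto
  next
    fix c d assume cd: "(c, d) \<in> pord (sd2_bdry n)"
    then have "c \<in> bd n" "d \<in> bd n" by (auto simp: pord_bd2)
    then show "(a' c, a' d) \<in> pord (st j)" using cd m2 c2 unfolding a'_def by auto
  qed
  have vb: "pos_hom (sd2 n) A b'"
    using hb unfolding pos_hom_def b'_def pord_sd2 by (auto simp: sd_def)
  have vc: "\<forall>c\<in>bd n. p (a' c) = b' c" using comp bd_sub unfolding a'_def b'_def by auto
  have valid: "valid j (st j)" unfolding valid_def pnj paj pbj using va vb vc by blast
  interpret att "st j" n a' "\<lambda>c. code (j, c)" using att_step[OF valid] pnj paj by simp
  have stj: "st (Suc j) = attach (st j) n a' (\<lambda>c. code (j, c))" using valid pnj paj by simp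
  define l where "l = lft n a' (\<lambda>c. code (j, c))"
  have "pos_hom (sd2 n) (st (Suc j)) l" unfolding l_def stj by (rule hom_lft)
  moreover have "pcar (st (Suc j)) \<subseteq> pcar E" unfolding pcar_E by (rule UN_upper) simp
  moreover have "pord (st (Suc j)) \<subseteq> pord E" unfolding pord_E by (rule UN_upper) simp
  ultimately have lh: "pos_hom (sd2 n) E l" by (rule hom_mono)
  show "\<exists>l. pos_hom (sd2 n) E l \<and> (\<forall>c\<in>pcar (sd2_bdry n). l c = a c) \<and> (\<forall>c\<in>pcar (sd2 n). p (l c) = b c)"
  proof (intro exI[of _ l] conjI ballI lh)
    fix c assume "c \<in> pcar (sd2_bdry n)"
    then show "l c = a c" unfolding l_def lft_def a'_def bd_def by simp
  next
    fix c assume c: "c \<in> pcar (sd2 n)"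
    show "p (l c) = b c"
    proof (cases "c \<in> bd n")
      case True
      then show ?thesis using comp unfolding l_def lft_def a'_def by simp
    next
      case False
      have "(j, c) \<in> K" using c inK sd_def by blast
      then have "p (code (j, c)) = b' c" using p_code pbj by simp
      then show ?thesis using False c unfolding l_def lft_def b'_def sd_def by simp
    qed
  qed
qed

end


theorem lemma6p1:
  fixes A :: "'u pos"
  assumes "infinite (UNIV :: 'u set)"
    and "is_pos A" and "finite (pcar A)" and "pcar A \<noteq> {}"
    and "\<And>n (X :: 'u pos) (Y :: 'u pos) f g h.
           pos_pushout n X Y f g h \<Longrightarrow> pos_retract A Y \<Longrightarrow> pos_retract A X"
  shows "\<not> pos_cofibrant A"
proof
  assume cof: "pos_cofibrant A"
  obtain f :: "nat \<Rightarrow> 'u" where inj: "inj f" using infinite_countable_subset[OF assms(1)] by blast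
  interpret cons A f using assms(2,3) inj by unfold_locales
  have idh: "pos_hom A A id" unfolding pos_hom_def by simp
  obtain l where lh: "pos_hom A E l" and pl: "\<And>x. x \<in> pcar A \<Longrightarrow> p (l x) = x"
    using cof tf idh unfolding pos_cofibrant_def by fastforce
  have lE: "l x \<in> pcar E" if "x \<in> pcar A" for x using lh that unfolding pos_hom_def by blast
  have lO: "(l x, l y) \<in> pord E" if "(x, y) \<in> pord A" for x y using lh that unfolding pos_hom_def by blast
  have "\<exists>m. l ` pcar A \<subseteq> pcar (st m)"
    by (rule absorb) (use lE assms(3) mono_st in \<open>auto simp: pcar_E\<close>)
  then obtain m1 where m1: "l ` pcar A \<subseteq> pcar (st m1)" by blast
  have "pord A \<subseteq> pcar A \<times> pcar A" using assms(2) unfolding is_pos_def by blast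
  then have finpo: "finite (pord A)" using assms(3) finite_subset by blast
  have "\<exists>m. (\<lambda>(x,y). (l x, l y)) ` pord A \<subseteq> pord (st m)"
    by (rule absorb) (use lO finpo mono_st in \<open>auto simp: pord_E\<close>)
  then obtain m2 where m2: "(\<lambda>(x,y). (l x, l y)) ` pord A \<subseteq> pord (st m2)" by blast
  define m where "m = max m1 m2"
  have c1: "pcar (st m1) \<subseteq> pcar (st m)" using mono_le(1)[of m1 m] m_def by simp
  have c2: "pord (st m2) \<subseteq> pord (st m)" using mono_le(2)[of m2 m] m_def by simp
  have "pos_hom A (st m) l" unfolding pos_hom_def using m1 m2 c1 c2 by blast
  moreover have "pos_hom (st m) A p" using inv by blast
  ultimately have ret: "pos_retract A (st m)" unfolding pos_retract_def using pl by blast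
  have down: "pos_retract A (st k) \<Longrightarrow> pos_retract A (st 0)" for k
  proof (induction k)
    case 0 then show ?case .
  next
    case (Suc k)
    show ?case
    proof (cases "valid k (st k)")
      case False
      then show ?thesis using Suc by simp
    next
      case True
      interpret att "st k" "pn k" "pa k" "\<lambda>c. code (k, c)" by (rule att_step[OF True])
      have "pos_retract A (st k)"
        by (rule assms(5)[OF pushout]) (use Suc True in simp)
      then show ?thesis by (rule Suc.IH)
    qed
  qed
  have "pos_retract A (st 0)" by (rule down[OF ret])
  then obtain i where "pos_hom A (st 0) i" unfolding pos_retract_def by blast
  moreover obtain x where "x \<in> pcar A" using assms(4) by blast
  ultimately have "i x \<in> pcar (st 0)" unfolding pos_hom_def by blast
  then show False by (simp add: pcar_def)
qed

end
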